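(* Assume $\|\mathbf{x}_t\|_\infty\le1$ for all $t$. For any $\tau\ge1$, let $\mathbf{z}_\tau=\mathbf{h}_{\tau^2}\hat{\mathbf{w}}_{\tau-1}-\mathbf{x}_{\tau^2}\mathbf{x}_{\tau^2}^\top\hat{\mathbf{w}}_{\tau-1}$. Then for all $i\in[d]$, $$|z_{\tau,i}|\le\frac{(d-1)(d-2)}{(k-1)(k-2)}\|\hat{\mathbf{w}}_{\tau-1}\|_1,\qquad\mathbb{E}_\tau[z_{\tau,i}^2]\le\frac{2(d-1)}{k-1}\|\hat{\mathbf{w}}_{\tau-1}\|_1^2.$$
   Context: Integers $3\le k\le d-3$, $[d]=\{1,\dots,d\}$. SAMPLING$(k,d,\mathbf{w})$ for nonzero $\mathbf{w}\in\mathbb{R}^d$: with $q_i=|w_i|/\|\mathbf{w}\|_1$, draw $I_1\in[d]$ with $\mathbb{P}(I_1=i)=q_i$, then $k-1$ distinct indices uniformly without replacement from $[d]\setminus\{I_1\}$; output the $k$-set $B$. At round $\tau$, $B_\tau=$SAMPLING$(k,d,\hat{\mathbf{w}}_{\tau-1})$ for a nonzero vector $\hat{\mathbf{w}}_{\tau-1}$ determined by $B_1,\dots,B_{\tau-1}$ ($\hat{\mathbf{w}}_0=\frac1d\mathbf{1}_d$). $\mathbb{P}$ and $\mathbb{E}_\tau[\cdot]=\mathbb{E}[\cdot\mid B_1,\dots,B_{\tau-1}]$ are over $B_\tau$. The instance $\mathbf{x}_{\tau^2}\in\mathbb{R}^d$ is fixed given the past; $h_{\tau^2}[i,i]=\frac{x_{\tau^2,i}^2}{\mathbb{P}[i\in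 B_\tau]}\mathbb{I}_{i\in B_\tau}$ and $h_{\tau^2}[i,j]=\frac{x_{\tau^2,i}x_{\tau^2,j}}{\mathbb{P}[i,j\in B_\tau]}\mathbb{I}_{i,j\in B_\tau}$ for $i\ne j$. *)

theory Defs
  imports "HOL-Probability.Probability"
begin

text \<open>Vectors in R^d are functions nat => real, indexed by [d] = {1..d}.\<close>

definition l1norm :: "nat \<Rightarrow> (nat \<Rightarrow> real) \<Rightarrow> real" where
  "l1norm d w = (\<Sum>i\<in>{1..d}. \<bar>w i\<bar>)"

definition first_index_pmf :: "nat \<Rightarrow> (nat \<Rightarrow> real) \<Rightarrow> nat pmf" where
  "first_index_pmf d w = pmf_of_list (map (\<lambda>i. (i, \<bar>w i\<bar> / l1norm d w)) [1..<d+1])"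

text \<open>SAMPLING(k,d,w): draw I1, then k-1 distinct indices uniformly without
  replacement from [d] minus I1 (i.e. a uniform (k-1)-subset); output the k-set.\<close>
definition SAMPLING :: "nat \<Rightarrow> nat \<Rightarrow> (nat \<Rightarrow> real) \<Rightarrow> nat set pmf" where
  "SAMPLING k d w =
     bind_pmf (first_index_pmf d w)
       (\<lambda>i. map_pmf (insert i) (pmf_of_set {S. S \<subseteq> {1..d} - {i} \<and> card S = k - 1}))"

definition hmat :: "nat set pmf \<Rightarrow> (nat \<Rightarrow> real) \<Rightarrow> nat set \<Rightarrow> nat \<Rightarrow> nat \<Rightarrow> real" where
  "hmat P x B i j =
     (if i = j then x i ^ 2 / measure_pmf.prob P {C. i \<in> C} * (if i \<in> B then 1 else 0)
      else x i * x j / measure_pmf.prob P {C. i \<in> C \<and> j \<in> C} * (if i \<in> B \<and> j \<in> B then 1 else 0))"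

definition zvec :: "nat \<Rightarrow> nat set pmf \<Rightarrow> (nat \<Rightarrow> real) \<Rightarrow> (nat \<Rightarrow> real) \<Rightarrow> nat set \<Rightarrow> nat \<Rightarrow> real" where
  "zvec d P x w B i = (\<Sum>j\<in>{1..d}. hmat P x B i j * w j) - x i * (\<Sum>j\<in>{1..d}. x j * w j)"

end

theory Submission
  imports Defs
begin

lemma count_sup:
  assumes "finite U" "A \<subseteq> U" "card A \<le> r"
  shows "card {S. S \<subseteq> U \<and> card S = r \<and> A \<subseteq> S} = (card U - card A) choose (r - card A)"
proof -
  have fA: "finite A" using assms finite_subset by blast
  have "bij_betw (\<lambda>S. S - A) {S. S \<subseteq> U \<and> card S = r \<and> A \<subseteq> S} {T. T \<subseteq> U - A \<and> card T = r - card A}"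
  proof (rule bij_betw_byWitness[where f'="\<lambda>T. T \<union> A"])
    show "\<forall>a\<in>{S. S \<subseteq> U \<and> card S = r \<and> A \<subseteq> S}. a - A \<union> A = a" by auto
    show "\<forall>a'\<in>{T. T \<subseteq> U - A \<and> card T = r - card A}. a' \<union> A - A = a'" by auto
    show "(\<lambda>S. S - A) ` {S. S \<subseteq> U \<and> card S = r \<and> A \<subseteq> S} \<subseteq> {T. T \<subseteq> U - A \<and> card T = r - card A}"
    proof clarify
      fix S assume "S \<subseteq> U" "A \<subseteq> S" "r = card S"
      then show "S - A \<subseteq> U - A \<and> card (S - A) = card S - card A"
        using fA assms(1) by (auto simp: card_Diff_subset)
    qed
    show "(\<lambda>T. T \<union> A) ` {T. T \<subseteq> U - A \<and> card T = r - card A} \<subseteq> {S. S \<subseteq> U \<and> card S = r \<and> A \<subseteq> S}"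
    proof clarify
      fix T assume "T \<subseteq> U - A" "card T = r - card A"
      moreover have "finite T" using \<open>T \<subseteq> U - A\<close> assms(1) finite_subset by blast
      moreover have "T \<inter> A = {}" using \<open>T \<subseteq> U - A\<close> by auto
      ultimately have "card (T \<union> A) = card T + card A" using fA card_Un_disjoint by blast
      then show "T \<union> A \<subseteq> U \<and> card (T \<union> A) = r \<and> A \<subseteq> T \<union> A"
        using fA assms \<open>T \<subseteq> U - A\<close> \<open>card T = r - card A\<close> by auto
    qed
  qed
  then have "card {S. S \<subseteq> U \<and> card S = r \<and> A \<subseteq> S} = card {T. T \<subseteq> U - A \<and> card T = r - card A}"
    by (rule bij_betw_same_card)
  also have "\<dots> = card (U - A) choose (r - card A)"
    using assms by (intro n_subsets) auto
  also have "card (U - A) = card U - card A" using assms fA by (simp add: card_Diff_subset)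
  finally show ?thesis .
qed

lemma count_sup0:
  assumes "finite U" "card A > r"
  shows "card {S. S \<subseteq> U \<and> card S = r \<and> A \<subseteq> S} = 0"
proof -
  have "{S. S \<subseteq> U \<and> card S = r \<and> A \<subseteq> S} = {}"
  proof (rule ccontr)
    assume "{S. S \<subseteq> U \<and> card S = r \<and> A \<subseteq> S} \<noteq> {}"
    then obtain S where "S \<subseteq> U" "card S = r" "A \<subseteq> S" by auto
    then have "card A \<le> card S" using assms finite_subset card_mono by metis
    then show False using assms \<open>card S = r\<close> by simp
  qed
  then show ?thesis by (metis card.empty)
qed

lemma aux_id: "(1 / (a::real) - 1) * (1 / c - 1) = 1 / (a * c) - 1 / a - 1 / c + 1"
  by (simp add: algebra_simps)

locale sctx =
  fixes k d :: nat and w :: "nat \<Rightarrow> real"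
  assumes k3: "3 \<le> k" and kd: "k \<le> d - 3" and nz: "\<exists>i\<in>{1..d}. w i \<noteq> 0"
begin

definition "W = l1norm d w"
definition "q f = \<bar>w f\<bar> / W"
definition "P = SAMPLING k d w"
definition "X f = {S. S \<subseteq> {1..d} - {f} \<and> card S = k - 1}"
definition "F = first_index_pmf d w"
definition "\<beta> m = real (if m \<le> k - 1 then (d - 1 - m) choose (k - 1 - m) else 0) / real ((d - 1) choose (k - 1))"

lemma W_pos: "W > 0"
proof -
  obtain i where i: "i \<in> {1..d}" "w i \<noteq> 0" using nz by blast
  have "\<bar>w i\<bar> \<le> W" unfolding W_def l1norm_def
    by (rule member_le_sum) (use i in auto)
  then show ?thesis using i by linarith
qed

lemma q_nonneg: "q f \<ge> 0" using W_pos by (simp add: q_def)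

lemma sum_q: "(\<Sum>f\<in>{1..d}. q f) = 1"
  using W_pos by (simp add: q_def W_def l1norm_def sum_divide_distrib[symmetric])

lemma wf: "pmf_of_list_wf (map (\<lambda>i. (i, \<bar>w i\<bar> / l1norm d w)) [1..<d+1])"
proof (rule pmf_of_list_wfI)
  show "\<And>x. x \<in> set (map snd (map (\<lambda>i. (i, \<bar>w i\<bar> / l1norm d w)) [1..<d + 1])) \<Longrightarrow> 0 \<le> x"
    using W_pos by (auto simp: W_def)
  have "sum_list (map snd (map (\<lambda>i. (i, \<bar>w i\<bar> / l1norm d w)) [1..<d + 1]))
      = sum_list (map q [1..<d+1])"
    by (simp only: map_map comp_def snd_conv q_def[abs_def] W_def)
  also have "\<dots> = (\<Sum>i\<in>{1..<d+1}. q i)"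
    by (subst sum_list_distinct_conv_sum_set) (simp_all only: distinct_upt set_upt)
  also have "{1..<d+1} = {1..d}" by auto
  finally show "sum_list (map snd (map (\<lambda>i. (i, \<bar>w i\<bar> / l1norm d w)) [1..<d + 1])) = 1"
    using sum_q by simp
qed

lemma pmf_F: assumes "f \<in> {1..d}" shows "pmf F f = q f"
proof -
  let ?xs = "map (\<lambda>i. (i, \<bar>w i\<bar> / l1norm d w)) [1..<d+1]"
  have "pmf F f = sum_list (map snd (filter (\<lambda>z. fst z = f) ?xs))"
    unfolding F_def first_index_pmf_def by (rule pmf_pmf_of_list[OF wf])
  also have "\<dots> = sum snd (set (filter (\<lambda>z. fst z = f) ?xs))"
    by (rule sum_list_distinct_conv_sum_set) (auto simp: distinct_map inj_on_def)
  also have "set (filter (\<lambda>z. fst z = f) ?xs) = {(f, \<bar>w f\<bar> / l1norm d w)}"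
    using assms by auto
  finally show ?thesis by (simp add: q_def W_def)
qed

lemma set_F: "set_pmf F \<subseteq> {1..d}"
  using set_pmf_of_list[OF wf] unfolding F_def first_index_pmf_def by auto

lemma E_F: "measure_pmf.expectation F g = (\<Sum>f\<in>{1..d}. q f * g f)"
  by (subst integral_measure_pmf[of "{1..d}"]) (use set_F pmf_F in auto)

lemma kd': "k - 1 \<le> d - 1" using kd by linarith

lemma card_X: assumes "f \<in> {1..d}" shows "card (X f) = (d - 1) choose (k - 1)"
proof -
  have "card ({1..d} - {f}) = d - 1" using assms by simp
  then show ?thesis unfolding X_def by (metis finite_Diff finite_atLeastAtMost n_subsets)
qed

lemma X_fin: "finite (X f)"
  unfolding X_def by (rule finite_subset[of _ "Pow {1..d}"]) auto

lemma X_ne: assumes "f \<in> {1..d}" shows "X f \<noteq> {}"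
proof -
  have "card (X f) > 0" using card_X[OF assms] kd' by simp
  then show ?thesis by auto
qed

lemma E_P: "measure_pmf.expectation P g =
   (\<Sum>f\<in>{1..d}. q f * ((\<Sum>S\<in>X f. g (insert f S)) / real (card (X f))))"
proof -
  have "measure_pmf.expectation P g = (\<Sum>f\<in>{1..d}. pmf F f *\<^sub>R
      measure_pmf.expectation (map_pmf (insert f) (pmf_of_set (X f))) g)"
    unfolding P_def SAMPLING_def F_def[symmetric] X_def[symmetric]
    by (rule pmf_expectation_bind) (use set_F X_fin X_ne in auto)
  also have "\<dots> = (\<Sum>f\<in>{1..d}. q f * ((\<Sum>S\<in>X f. g (insert f S)) / real (card (X f))))"
    by (rule sum.cong) (use X_fin X_ne pmf_F in \<open>auto simp: integral_pmf_of_set\<close>)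
  finally show ?thesis .
qed

lemma set_P: "set_pmf P \<subseteq> Pow {1..d}"
proof -
  have "set_pmf P \<subseteq> (\<Union>f\<in>set_pmf F. insert f ` X f)"
  proof
    fix B assume "B \<in> set_pmf P"
    then obtain f S where fS: "f \<in> set_pmf F" "S \<in> set_pmf (pmf_of_set (X f))" "B = insert f S"
      unfolding P_def SAMPLING_def F_def[symmetric] X_def[symmetric] by (auto simp: set_bind_pmf)
    then have "f \<in> {1..d}" using set_F by auto
    then have "S \<in> X f" using fS(2) set_pmf_of_set[OF X_ne X_fin] by auto
    then show "B \<in> (\<Union>f\<in>set_pmf F. insert f ` X f)" using fS by auto
  qed
  also have "\<dots> \<subseteq> Pow {1..d}" using set_F by (auto simp: X_def)
  finally show ?thesis .
qed

lemma fin_P: "finite (set_pmf P)"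
  using set_P finite_subset by blast

lemma integ: "integrable (measure_pmf P) (g :: nat set \<Rightarrow> real)"
  by (rule integrable_measure_pmf_finite[OF fin_P])

definition "pr A = measure_pmf.prob P {C. A \<subseteq> C}"

lemma pr_E: "pr A = measure_pmf.expectation P (indicator {C. A \<subseteq> C})"
  by (simp add: pr_def)

lemma inner_count:
  assumes f: "f \<in> {1..d}" and A: "A \<subseteq> {1..d}"
  shows "(\<Sum>S\<in>X f. indicator {C. A \<subseteq> C} (insert f S)) / real (card (X f)) = \<beta> (card (A - {f}))"
proof -
  let ?U = "{1..d} - {f}"
  have "(\<Sum>S\<in>X f. indicator {C. A \<subseteq> C} (insert f S) :: real) = (\<Sum>S\<in>X f. of_bool (A \<subseteq> insert f S))"
    by (simp add: indicator_def)
  also have "\<dots> = real (card (X f \<inter> {S. A \<subseteq> insert f S}))"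
    using X_fin by simp
  also have "X f \<inter> {S. A \<subseteq> insert f S} = {S. S \<subseteq> ?U \<and> card S = k - 1 \<and> A - {f} \<subseteq> S}"
    unfolding X_def by auto
  finally have eq: "(\<Sum>S\<in>X f. indicator {C. A \<subseteq> C} (insert f S) :: real) = real (card {S. S \<subseteq> ?U \<and> card S = k - 1 \<and> A - {f} \<subseteq> S})" .
  have cU: "card ?U = d - 1" using f by simp
  have "card {S. S \<subseteq> ?U \<and> card S = k - 1 \<and> A - {f} \<subseteq> S} =
     (if card (A - {f}) \<le> k - 1 then (d - 1 - card (A - {f})) choose (k - 1 - card (A - {f})) else 0)"
  proof (cases "card (A - {f}) \<le> k - 1")
    case True
    then show ?thesis using count_sup[of ?U "A - {f}" "k - 1"] cU A by auto
  next
    case False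
    then show ?thesis using count_sup0[of ?U "k - 1" "A - {f}"] by auto
  qed
  then show ?thesis using eq card_X[OF f] by (simp add: \<beta>_def)
qed

lemma pr_sum: assumes A: "A \<subseteq> {1..d}" shows "pr A = (\<Sum>f\<in>{1..d}. q f * \<beta> (card (A - {f})))"
  unfolding pr_E E_P using inner_count[OF _ A] by (intro sum.cong) auto

definition "Q A = (\<Sum>f\<in>A. q f)"

lemma pr_eq: assumes A: "A \<subseteq> {1..d}" "A \<noteq> {}"
  shows "pr A = Q A * \<beta> (card A - 1) + (1 - Q A) * \<beta> (card A)"
proof -
  have fA: "finite A" using A finite_subset by blast
  have "pr A = (\<Sum>f\<in>{1..d} - A. q f * \<beta> (card (A - {f}))) + (\<Sum>f\<in>A. q f * \<beta> (card (A - {f})))"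
    unfolding pr_sum[OF A(1)] by (rule sum.subset_diff[OF A(1)]) simp
  also have "(\<Sum>f\<in>{1..d} - A. q f * \<beta> (card (A - {f}))) = (\<Sum>f\<in>{1..d} - A. q f) * \<beta> (card A)"
    by (simp add: sum_distrib_right)
  also have "(\<Sum>f\<in>A. q f * \<beta> (card (A - {f}))) = (\<Sum>f\<in>A. q f) * \<beta> (card A - 1)"
    by (simp add: sum_distrib_right fA)
  also have "(\<Sum>f\<in>{1..d} - A. q f) = 1 - Q A"
    using sum.subset_diff[OF A(1), of q] sum_q by (simp add: Q_def)
  finally show ?thesis by (simp add: Q_def)
qed

lemma rn: "2 \<le> k - 1" "k - 1 + 3 \<le> d - 1" using k3 kd by linarith+

lemma C_pos: "real ((d - 1) choose (k - 1)) > 0" using kd' by simp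

lemma beta0: "\<beta> 0 = 1" using C_pos by (simp add: \<beta>_def)

lemma beta_step: assumes "m + 1 \<le> k - 1"
  shows "\<beta> (Suc m) = \<beta> m * real (k - 1 - m) / real (d - 1 - m)"
proof -
  define a where "a = d - 1 - m"
  define b where "b = k - 1 - m"
  have b0: "0 < b" and ab: "b \<le> a" using assms kd' unfolding a_def b_def by linarith+
  have e: "b * (a choose b) = a * ((a - 1) choose (b - 1))"
    using b0 by (rule times_binomial_minus1_eq)
  have e': "real b * real (a choose b) = real a * real ((a - 1) choose (b - 1))"
    using arg_cong[OF e, of real] by simp
  have a0: "real a > 0" using b0 ab by simp
  have "d - 1 - Suc m = a - 1" "k - 1 - Suc m = b - 1" unfolding a_def b_def by auto
  then have "\<beta> (Suc m) = real ((a - 1) choose (b - 1)) / real ((d - 1) choose (k - 1))"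
    using assms by (simp add: \<beta>_def)
  also have "\<dots> = real (a choose b) * real b / real a / real ((d - 1) choose (k - 1))"
    using e' a0 by (simp add: field_simps)
  also have "\<beta> m = real (a choose b) / real ((d - 1) choose (k - 1))"
    using assms unfolding \<beta>_def a_def b_def by simp
  ultimately show ?thesis unfolding a_def b_def by simp
qed

definition "b1 = real (k - 1) / real (d - 1)"
definition "b2 = b1 * real (k - 2) / real (d - 2)"
definition "b3 = b2 * (real (k - 1) - 2) / (real (d - 1) - 2)"

lemma beta1: "\<beta> 1 = b1"
  using beta_step[of 0] rn beta0 by (simp add: b1_def)

lemma beta2: "\<beta> 2 = b2"
proof -
  have "\<beta> (Suc 1) = \<beta> 1 * real (k - 1 - 1) / real (d - 1 - 1)" using rn by (intro beta_step) auto
  moreover have "k - 1 - 1 = k - 2" "d - 1 - 1 = d - 2" by auto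
  ultimately show ?thesis using beta1 by (simp add: b2_def numeral_2_eq_2)
qed

lemma beta3: "\<beta> 3 = b3"
proof (cases "k - 1 = 2")
  case True
  then show ?thesis by (simp add: \<beta>_def b3_def)
next
  case False
  then have r3: "3 \<le> k - 1" using rn by linarith
  have "\<beta> (Suc 2) = \<beta> 2 * real (k - 1 - 2) / real (d - 1 - 2)" using r3 by (intro beta_step) auto
  moreover have "real (k - 1 - 2) = real (k - 1) - 2" "real (d - 1 - 2) = real (d - 1) - 2"
    using r3 rn by auto
  ultimately show ?thesis using beta2 by (simp add: b3_def numeral_3_eq_3)
qed

lemma b_facts: "0 < b2" "b2 \<le> b1" "b1 \<le> 1" "0 \<le> b3" "b1 * b3 \<le> b2 ^ 2" "0 < b1"
proof -
  define R where "R = real (k - 1)"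
  define N where "N = real (d - 1)"
  have R2: "R \<ge> 2" and NR: "N \<ge> R + 3" using rn unfolding R_def N_def by auto
  have e1: "real (k - 2) = R - 1" "real (d - 2) = N - 1" using rn unfolding R_def N_def by auto
  have B1: "b1 = R / N" unfolding b1_def R_def N_def ..
  have B2: "b2 = b1 * (R - 1) / (N - 1)" unfolding b2_def e1 ..
  have B3: "b3 = b2 * (R - 2) / (N - 2)" unfolding b3_def R_def N_def ..
  show p1: "0 < b1" unfolding B1 using R2 NR by simp
  show "b1 \<le> 1" unfolding B1 using R2 NR by simp
  have f2: "(R - 1) / (N - 1) \<le> 1" "(R - 1) / (N - 1) > 0" using R2 NR by auto
  have "R - 1 > 0" "N - 1 > 0" using R2 NR by auto
  then have "b1 * (R - 1) > 0" using p1 by (intro mult_pos_pos)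
  then show p2: "0 < b2" unfolding B2 using \<open>N - 1 > 0\<close> by (intro divide_pos_pos)
  show "b2 \<le> b1" unfolding B2 using p1 f2 mult_left_le[of "(R - 1) / (N - 1)" b1] by simp
  have f3: "(R - 2) / (N - 2) \<ge> 0" using R2 NR by auto
  have "0 \<le> b2 * ((R - 2) / (N - 2))" using p2 f3 by (intro mult_nonneg_nonneg) auto
  then show "0 \<le> b3" unfolding B3 by simp
  have f4: "(R - 2) / (N - 2) \<le> (R - 1) / (N - 1)"
    using R2 NR by (simp add: divide_simps) (simp add: algebra_simps)
  have "b1 * b3 = b1 * b2 * ((R - 2) / (N - 2))" unfolding B3 by simp
  also have "\<dots> \<le> b1 * b2 * ((R - 1) / (N - 1))"
    using f4 p1 p2 by (intro mult_left_mono) auto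
  also have "\<dots> = b2 ^ 2" unfolding B2 power2_eq_square by simp
  finally show "b1 * b3 \<le> b2 ^ 2" .
qed

lemma Q_le1: assumes "A \<subseteq> {1..d}" shows "Q A \<le> 1"
proof -
  have "Q A \<le> (\<Sum>f\<in>{1..d}. q f)" unfolding Q_def
    by (rule sum_mono2) (use assms q_nonneg in auto)
  then show ?thesis using sum_q by simp
qed

lemma Q_ge0: "Q A \<ge> 0" unfolding Q_def by (rule sum_nonneg) (use q_nonneg in auto)

lemma pr1: assumes "i \<in> {1..d}" shows "pr {i} = q i + (1 - q i) * b1"
  using pr_eq[of "{i}"] assms beta0 beta1 by (simp add: Q_def)

lemma pr2: assumes "i \<in> {1..d}" "j \<in> {1..d}" "i \<noteq> j"
  shows "pr {i, j} = (q i + q j) * b1 + (1 - (q i + q j)) * b2"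
  using pr_eq[of "{i, j}"] assms beta1 beta2[unfolded numeral_2_eq_2] by (simp add: Q_def)

lemma pr3: assumes "i \<in> {1..d}" "j \<in> {1..d}" "l \<in> {1..d}" "i \<noteq> j" "i \<noteq> l" "j \<noteq> l"
  shows "pr {i, j, l} = (q i + q j + q l) * b2 + (1 - (q i + q j + q l)) * b3"
proof -
  have "card {i, j, l} = 3" using assms by simp
  moreover have "Q {i, j, l} = q i + q j + q l" using assms by (simp add: Q_def)
  ultimately show ?thesis using pr_eq[of "{i, j, l}"] assms beta2[unfolded numeral_2_eq_2] beta3 by (simp add: numeral_3_eq_3)
qed

lemma q_le1: assumes "i \<in> {1..d}" shows "q i \<le> 1"
  using Q_le1[of "{i}"] assms by (simp add: Q_def)

lemma q2_le1: assumes "i \<in> {1..d}" "j \<in> {1..d}" "i \<noteq> j" shows "q i + q j \<le> 1"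
  using Q_le1[of "{i,j}"] assms by (simp add: Q_def)

lemma q3_le1: assumes "i \<in> {1..d}" "j \<in> {1..d}" "l \<in> {1..d}" "i \<noteq> j" "i \<noteq> l" "j \<noteq> l"
  shows "q i + q j + q l \<le> 1"
  using Q_le1[of "{i,j,l}"] assms by (simp add: Q_def)

lemma pr_le1: "pr A \<le> 1" unfolding pr_def by simp

lemma pr_single_ge: assumes "i \<in> {1..d}" shows "pr {i} \<ge> b1"
proof -
  have "q i + (1 - q i) * b1 - b1 = q i * (1 - b1)" by (simp add: algebra_simps)
  moreover have "q i * (1 - b1) \<ge> 0" using q_nonneg b_facts by simp
  ultimately show ?thesis using pr1[OF assms] by linarith
qed

lemma pr_pair_ge: assumes "i \<in> {1..d}" "j \<in> {1..d}" "i \<noteq> j"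
  shows "pr {i, j} \<ge> b2" "pr {i, j} \<ge> q j * b1"
proof -
  have e: "pr {i, j} = b2 + (q i + q j) * (b1 - b2)" using pr2[OF assms] by (simp add: algebra_simps)
  have "(q i + q j) * (b1 - b2) \<ge> 0" using q_nonneg b_facts by simp
  then show "pr {i, j} \<ge> b2" using e by linarith
  have "pr {i, j} - q j * b1 = (1 - (q i + q j)) * b2 + q i * b1"
    using pr2[OF assms] by (simp add: algebra_simps)
  moreover have "(1 - (q i + q j)) * b2 \<ge> 0" using q2_le1[OF assms] b_facts by simp
  moreover have "q i * b1 \<ge> 0" using q_nonneg b_facts by simp
  ultimately show "pr {i, j} \<ge> q j * b1" by linarith
qed

lemma P_ge_b2: assumes "i \<in> {1..d}" "j \<in> {1..d}" shows "pr {i, j} \<ge> b2"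
  using assms pr_pair_ge(1)[OF assms] pr_single_ge[of i] b_facts by (cases "i = j") auto

lemma key: assumes "i \<in> {1..d}" "j \<in> {1..d}" "l \<in> {1..d}" "i \<noteq> j" "i \<noteq> l" "j \<noteq> l"
  shows "b1 * pr {i, j, l} \<le> pr {i, j} * pr {i, l}"
proof -
  define u where "u = q i"
  define a where "a = q j"
  define c where "c = q l"
  define \<delta> where "\<delta> = b1 - b2"
  have s1: "u + a + c \<le> 1" using q3_le1[OF assms] unfolding u_def a_def c_def .
  have nn: "u \<ge> 0" "a \<ge> 0" "c \<ge> 0" "\<delta> \<ge> 0" using q_nonneg b_facts unfolding u_def a_def c_def \<delta>_def by auto
  have P1: "pr {i, j} = b2 + (u + a) * \<delta>" using pr2[OF assms(1,2,4)] unfolding u_def a_def \<delta>_def by (simp add: algebra_simps)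
  have P2: "pr {i, l} = b2 + (u + c) * \<delta>" using pr2[OF assms(1,3,5)] unfolding u_def c_def \<delta>_def by (simp add: algebra_simps)
  have P3: "pr {i, j, l} = b3 + (u + a + c) * (b2 - b3)" using pr3[OF assms] unfolding u_def a_def c_def by (simp add: algebra_simps)
  have id: "pr {i, j} * pr {i, l} - b1 * pr {i, j, l}
      = (b2 ^ 2 - b1 * b3) * (1 - (u + a + c)) + b2 * \<delta> * u + ((u + a) * (u + c)) * \<delta> ^ 2"
    unfolding P1 P2 P3 \<delta>_def by (simp add: algebra_simps power2_eq_square)
  have "(b2 ^ 2 - b1 * b3) * (1 - (u + a + c)) \<ge> 0" using b_facts s1 by simp
  moreover have "b2 * \<delta> * u \<ge> 0" using b_facts nn by simp
  moreover have "((u + a) * (u + c)) * \<delta> ^ 2 \<ge> 0" using nn by simp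
  ultimately show ?thesis using id by linarith
qed

lemma P_pos: assumes "i \<in> {1..d}" "j \<in> {1..d}" shows "pr {i, j} > 0"
  using P_ge_b2[OF assms] b_facts by linarith

definition "T i j l = pr {i, j, l} / (pr {i, j} * pr {i, l})"

lemma T_nonneg: "T i j l \<ge> 0"
  unfolding T_def pr_def by simp

lemma T_le: assumes "i \<in> {1..d}" "j \<in> {1..d}" "l \<in> {1..d}" "j \<noteq> l"
  shows "T i j l \<le> 1 / b1"
proof -
  have pi: "pr {i} \<ge> b1" using pr_single_ge[OF assms(1)] .
  have pb: "b1 > 0" using b_facts by simp
  have inv: "1 / pr {i} \<le> 1 / b1" using pi pb by (intro divide_left_mono) auto
  consider "j = i" | "l = i" | "i \<noteq> j" "i \<noteq> l" using assms by blast
  then show ?thesis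
  proof cases
    case 1
    then have "T i j l = 1 / pr {i}" using P_pos[OF assms(1,3)] by (simp add: T_def insert_commute)
    then show ?thesis using inv by simp
  next
    case 2
    then have "T i j l = 1 / pr {i}" using P_pos[OF assms(1,2)] by (simp add: T_def insert_commute)
    then show ?thesis using inv by simp
  next
    case 3
    have k: "b1 * pr {i, j, l} \<le> pr {i, j} * pr {i, l}" using key assms 3 by blast
    have "pr {i, j} * pr {i, l} > 0" using P_pos assms by simp
    then show ?thesis unfolding T_def using k pb by (simp add: field_simps)
  qed
qed

lemma T_term: assumes "i \<in> {1..d}" "j \<in> {1..d}" "l \<in> {1..d}"
  shows "\<bar>w j\<bar> * \<bar>w l\<bar> * T i j l \<le> \<bar>w j\<bar> * \<bar>w l\<bar> / b1 + (if j = l then \<bar>w j\<bar> * W / b1 else 0)"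
proof (cases "j = l")
  case False
  then have "\<bar>w j\<bar> * \<bar>w l\<bar> * T i j l \<le> \<bar>w j\<bar> * \<bar>w l\<bar> * (1 / b1)"
    using T_le[OF assms] by (intro mult_left_mono) auto
  then show ?thesis using False by simp
next
  case True
  have pb: "b1 > 0" using b_facts by simp
  have WW: "W > 0" using W_pos .
  show ?thesis
  proof (cases "j = i")
    case True2: True
    have "T i j l = 1 / pr {i}" using True True2 P_pos[OF assms(1,1)] by (simp add: T_def)
    moreover have "1 / pr {i} \<le> 1 / b1" using pr_single_ge[OF assms(1)] pb by (intro divide_left_mono) auto
    ultimately have "\<bar>w j\<bar> * \<bar>w l\<bar> * T i j l \<le> \<bar>w j\<bar> * \<bar>w l\<bar> * (1 / b1)"
      by (intro mult_left_mono) auto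
    moreover have "\<bar>w j\<bar> * W / b1 \<ge> 0" using pb WW by simp
    ultimately show ?thesis using True by simp
  next
    case False
    have Tj: "T i j l = 1 / pr {i, j}" using True P_pos[OF assms(1,2)] by (simp add: T_def)
    have ge: "pr {i, j} \<ge> q j * b1" using pr_pair_ge(2)[OF assms(1,2)] False by simp
    show ?thesis
    proof (cases "w j = 0")
      case True
      then show ?thesis using \<open>j = l\<close> by simp
    next
      case wnz: False
      have qpos: "q j * b1 > 0" using wnz WW pb by (simp add: q_def)
      have "\<bar>w j\<bar> * \<bar>w j\<bar> * (1 / pr {i, j}) \<le> \<bar>w j\<bar> * \<bar>w j\<bar> * (1 / (q j * b1))"
        using ge qpos by (intro mult_left_mono divide_left_mono) auto
      also have "\<dots> = \<bar>w j\<bar> * W / b1" using wnz WW pb by (simp add: q_def field_simps)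
      finally have "\<bar>w j\<bar> * \<bar>w l\<bar> * T i j l \<le> \<bar>w j\<bar> * W / b1" using Tj \<open>j = l\<close> by simp
      moreover have "\<bar>w j\<bar> * \<bar>w l\<bar> / b1 \<ge> 0" using pb by simp
      moreover have "(if j = l then \<bar>w j\<bar> * W / b1 else 0) = \<bar>w j\<bar> * W / b1" using \<open>j = l\<close> by simp
      ultimately show ?thesis by linarith
    qed
  qed
qed

definition "cc i j B = (if {i, j} \<subseteq> B then 1 / pr {i, j} else 0)"

lemma hmat_eq: "hmat P x B i j = x i * x j * cc i j B"
proof (cases "i = j")
  case True
  have "pr {i, j} = measure_pmf.prob P {C. i \<in> C}" unfolding pr_def True
    by (rule arg_cong[where f="measure_pmf.prob P"]) auto
  then show ?thesis unfolding hmat_def cc_def using True by (auto simp: power2_eq_square)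
next
  case False
  have "pr {i, j} = measure_pmf.prob P {C. i \<in> C \<and> j \<in> C}" unfolding pr_def
    by (rule arg_cong[where f="measure_pmf.prob P"]) auto
  then show ?thesis unfolding hmat_def cc_def using False by auto
qed

lemma z_eq: "zvec d P x w B i = (\<Sum>j\<in>{1..d}. x i * x j * w j * (cc i j B - 1))"
  unfolding zvec_def hmat_eq by (simp add: sum_distrib_left sum_subtractf algebra_simps)

lemma cc_bound: assumes "i \<in> {1..d}" "j \<in> {1..d}" shows "\<bar>cc i j B - 1\<bar> \<le> 1 / b2"
proof -
  have p: "b2 \<le> pr {i, j}" "pr {i, j} \<le> 1" "0 < b2" "b2 \<le> 1"
    using P_ge_b2[OF assms] pr_le1 b_facts by auto
  have one: "1 \<le> 1 / b2" using p by simp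
  have "1 / pr {i, j} \<le> 1 / b2" using p by (intro divide_left_mono) auto
  moreover have "1 \<le> 1 / pr {i, j}" using p by simp
  ultimately show ?thesis using one unfolding cc_def by auto
qed

lemma bound1: assumes "\<forall>j\<in>{1..d}. \<bar>x j\<bar> \<le> 1" "i \<in> {1..d}"
  shows "\<bar>zvec d P x w B i\<bar> \<le> W / b2"
proof -
  have "\<bar>zvec d P x w B i\<bar> \<le> (\<Sum>j\<in>{1..d}. \<bar>x i * x j * w j * (cc i j B - 1)\<bar>)"
    unfolding z_eq by (rule sum_abs)
  also have "\<dots> \<le> (\<Sum>j\<in>{1..d}. \<bar>w j\<bar> * (1 / b2))"
  proof (rule sum_mono)
    fix j assume j: "j \<in> {1..d}"
    have xx: "\<bar>x i * x j\<bar> \<le> 1" using assms j by (simp add: abs_mult mult_le_one)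
    have "\<bar>x i * x j * w j * (cc i j B - 1)\<bar> = \<bar>x i * x j\<bar> * (\<bar>w j\<bar> * \<bar>cc i j B - 1\<bar>)"
      by (simp add: abs_mult)
    also have "\<dots> \<le> 1 * (\<bar>w j\<bar> * \<bar>cc i j B - 1\<bar>)" using xx by (intro mult_right_mono) auto
    also have "\<dots> \<le> \<bar>w j\<bar> * (1 / b2)" using mult_left_mono[OF cc_bound[OF assms(2) j], of "\<bar>w j\<bar>"] by simp
    finally show "\<bar>x i * x j * w j * (cc i j B - 1)\<bar> \<le> \<bar>w j\<bar> * (1 / b2)" .
  qed
  also have "\<dots> = W / b2" by (simp add: W_def l1norm_def sum_divide_distrib)
  finally show ?thesis .
qed

lemma E_cc2: assumes "i \<in> {1..d}" "j \<in> {1..d}" "l \<in> {1..d}"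
  shows "measure_pmf.expectation P (\<lambda>B. (cc i j B - 1) * (cc i l B - 1)) = T i j l - 1"
proof -
  define a where "a = pr {i, j}"
  define c where "c = pr {i, l}"
  have a0: "a > 0" and c0: "c > 0" using P_pos assms unfolding a_def c_def by auto
  have fe: "(\<lambda>B. (cc i j B - 1) * (cc i l B - 1)) = (\<lambda>B. (1 / (a * c)) * indicator {C. {i, j, l} \<subseteq> C} B
     - (1 / a) * indicator {C. {i, j} \<subseteq> C} B - (1 / c) * indicator {C. {i, l} \<subseteq> C} B + 1)"
    unfolding cc_def a_def[symmetric] c_def[symmetric] using aux_id[of a c] by (auto simp: fun_eq_iff indicator_def)
  have "measure_pmf.expectation P (\<lambda>B. (cc i j B - 1) * (cc i l B - 1))
     = (1 / (a * c)) * pr {i, j, l} - (1 / a) * pr {i, j} - (1 / c) * pr {i, l} + 1"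
    unfolding fe pr_E by (simp add: integ)
  also have "\<dots> = T i j l - 1" using a0 c0 unfolding T_def a_def c_def by simp
  finally show ?thesis .
qed

lemma bound2: assumes "\<forall>j\<in>{1..d}. \<bar>x j\<bar> \<le> 1" "i \<in> {1..d}"
  shows "measure_pmf.expectation P (\<lambda>B. (zvec d P x w B i)^2) \<le> 2 * W ^ 2 / b1"
proof -
  define a where "a j = x i * x j * w j" for j
  have sq: "(\<lambda>B. (zvec d P x w B i)^2) = (\<lambda>B. \<Sum>j\<in>{1..d}. \<Sum>l\<in>{1..d}. (a j * a l) * ((cc i j B - 1) * (cc i l B - 1)))"
    unfolding z_eq power2_eq_square sum_product a_def by (simp add: algebra_simps)
  have "measure_pmf.expectation P (\<lambda>B. (zvec d P x w B i)^2)
      = (\<Sum>j\<in>{1..d}. \<Sum>l\<in>{1..d}. (a j * a l) * measure_pmf.expectation P (\<lambda>B. (cc i j B - 1) * (cc i l B - 1)))"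
    unfolding sq by (simp add: integ)
  also have "\<dots> = (\<Sum>j\<in>{1..d}. \<Sum>l\<in>{1..d}. (a j * a l) * (T i j l - 1))"
    using E_cc2[OF assms(2)] by (intro sum.cong) auto
  also have "\<dots> = (\<Sum>j\<in>{1..d}. \<Sum>l\<in>{1..d}. (a j * a l) * T i j l) - (\<Sum>j\<in>{1..d}. a j) ^ 2"
    by (simp add: algebra_simps sum_subtractf power2_eq_square sum_product)
  also have "\<dots> \<le> (\<Sum>j\<in>{1..d}. \<Sum>l\<in>{1..d}. (a j * a l) * T i j l)" by simp
  also have "\<dots> \<le> (\<Sum>j\<in>{1..d}. \<Sum>l\<in>{1..d}. \<bar>w j\<bar> * \<bar>w l\<bar> / b1 + (if j = l then \<bar>w j\<bar> * W / b1 else 0))"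
  proof (intro sum_mono)
    fix j l assume j: "j \<in> {1..d}" and l: "l \<in> {1..d}"
    have aj: "\<bar>a j\<bar> \<le> \<bar>w j\<bar>" and al: "\<bar>a l\<bar> \<le> \<bar>w l\<bar>"
      using assms j l unfolding a_def by (auto simp: abs_mult mult_le_one intro!: mult_left_le_one_le mult_right_le_one_le)
    have "a j * a l * T i j l \<le> \<bar>a j * a l\<bar> * T i j l" using T_nonneg by (intro mult_right_mono) auto
    also have "\<dots> \<le> \<bar>w j\<bar> * \<bar>w l\<bar> * T i j l"
      using T_nonneg aj al by (auto simp: abs_mult intro!: mult_right_mono mult_mono)
    also have "\<dots> \<le> \<bar>w j\<bar> * \<bar>w l\<bar> / b1 + (if j = l then \<bar>w j\<bar> * W / b1 else 0)"
      by (rule T_term[OF assms(2) j l])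
    finally show "a j * a l * T i j l \<le> \<bar>w j\<bar> * \<bar>w l\<bar> / b1 + (if j = l then \<bar>w j\<bar> * W / b1 else 0)" .
  qed
  also have "\<dots> = (\<Sum>j\<in>{1..d}. \<Sum>l\<in>{1..d}. \<bar>w j\<bar> * \<bar>w l\<bar>) / b1 + (\<Sum>j\<in>{1..d}. \<bar>w j\<bar>) * W / b1"
    by (simp add: sum.distrib sum_divide_distrib sum_distrib_right)
  also have "\<dots> = W ^ 2 / b1 + W * W / b1"
    by (simp add: W_def l1norm_def power2_eq_square sum_product)
  also have "\<dots> = 2 * W ^ 2 / b1" by (simp add: power2_eq_square)
  finally show ?thesis .
qed

end

theorem corollary1:
  fixes k d :: nat and w x :: "nat \<Rightarrow> real"
  assumes "3 \<le> k" and "k \<le> d - 3" and "d \<ge> 3"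
    and "\<exists>i\<in>{1..d}. w i \<noteq> 0"
    and "\<forall>i\<in>{1..d}. \<bar>x i\<bar> \<le> 1"
    and "i \<in> {1..d}"
  shows "(\<forall>B\<in>set_pmf (SAMPLING k d w).
            \<bar>zvec d (SAMPLING k d w) x w B i\<bar>
              \<le> (real d - 1) * (real d - 2) / ((real k - 1) * (real k - 2)) * l1norm d w)
       \<and> measure_pmf.expectation (SAMPLING k d w) (\<lambda>B. (zvec d (SAMPLING k d w) x w B i)^2)
              \<le> 2 * (real d - 1) / (real k - 1) * (l1norm d w)^2"
proof -
  interpret sctx k d w using assms by unfold_locales auto
  have r: "real (k - 1) = real k - 1" "real (k - 2) = real k - 2"
    "real (d - 1) = real d - 1" "real (d - 2) = real d - 2" using assms by auto
  have pos: "real k - 1 > 0" "real k - 2 > 0" "real d - 1 > 0" "real d - 2 > 0" using assms by auto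
  have e2: "W / b2 = (real d - 1) * (real d - 2) / ((real k - 1) * (real k - 2)) * l1norm d w"
    unfolding b2_def b1_def r W_def using pos by (simp add: field_simps)
  have e1: "2 * W ^ 2 / b1 = 2 * (real d - 1) / (real k - 1) * (l1norm d w)^2"
    unfolding b1_def r W_def using pos by (simp add: field_simps)
  show ?thesis
    using bound1[OF assms(5,6)] bound2[OF assms(5,6)] e1 e2 unfolding P_def by auto
qed

end
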